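(* Let $K_1,\dots,K_m\subset\mathbb{R}^n$ be closed sets, all super-regular at $x^*\in K:=\bigcap_{l=1}^mK_l$, and suppose the local metric inequality holds at $x^*$: there are $\beta\ge1$ and a neighborhood $V_1$ of $x^*$ with $d(x,K)\le\beta\max_{1\le l\le m}d(x,K_l)$ for all $x\in V_1$. Let $$\rho:=\frac{\sqrt{\beta^2-(1-\tau)^2}}{\beta},\qquad L:=\frac{\beta}{1-\rho}.$$ Then for any $\tau\in(0,1)$ there is a neighborhood $U$ of $x^*$ such that for any $x_0\in U$ and any positive integer $\bar p$, the local super-regular SHQP algorithm (described in the context) with $\tau_i=\tau$ for all $i$ generates a sequence $\{x_i\}$ converging to some $\bar x\in K\cap V_1$ with $$\|x_{i+1}-\bar x\|\le\|x_i-\bar x\|\ \text{ and }\ \|x_i-\bar x\|\le L\max_{l\in\{1,\dots,m\}}d(x_i,K_l)\quad\text{for all }i\ge0.$$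
   Context: For a closed set $C\subset\mathbb{R}^n$ and $\bar x\in C$, the regular normal cone is $\hat N_C(\bar x)=\{y:\langle y,x-\bar x\rangle\le o(\|x-\bar x\|)\text{ for all }x\in C\}$ and the limiting normal cone $N_C(\bar x)$ is the set of $y$ for which there exist $x_i\to\bar x$ with $x_i\in C$ and $y_i\in\hat N_C(x_i)$ with $y_i\to y$. $C$ is super-regular at $\bar x\in C$ if for every $\delta>0$ there is a neighborhood $V$ of $\bar x$ such that $\langle z-y,v\rangle\le\delta\|z-y\|\|v\|$ for all $z,y\in C\cap V$ and $v\in N_C(y)$. $P_C(x)$ denotes the set of nearest points of $C$ to $x$. Local super-regular SHQP algorithm (parameters: a positive integer $\bar p$ and numbers $\tau_i\in[0,1)$): starting from $x_0$, for $i=1,2,\dots$: choose $\bar j_i\in\arg\max_j d(x_{i-1},K_j)$; pick $x_i^{(\bar j_i)}\in P_{K_{\bar j_i}}(x_{i-1})$; set $a_i=x_{i-1}-x_i^{(\bar j_i)}$ and $b_i=\langle a_i,(1-\tau_i)x_i^{(\bar j_i)}+\tau_ix_{i-1}\rangle$; let $\tilde F_i=\{x:\langle a_l,x\rangle\le b_l\text{ for }\max(1,i-\bar p)\le l\le i\}$ and $x_i=P_{\tilde F_i}(x_{i-1})$. *)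

theory Defs
  imports "HOL-Analysis.Analysis"
begin

definition regular_normal_cone :: "'a::euclidean_space set \<Rightarrow> 'a \<Rightarrow> 'a set" where
  "regular_normal_cone C xb =
     {y. \<forall>e>0. \<exists>d>0. \<forall>x\<in>C. norm (x - xb) < d \<longrightarrow> inner y (x - xb) \<le> e * norm (x - xb)}"

definition limiting_normal_cone :: "'a::euclidean_space set \<Rightarrow> 'a \<Rightarrow> 'a set" where
  "limiting_normal_cone C xb =
     {y. \<exists>xs ys. (\<forall>i. xs i \<in> C \<and> ys i \<in> regular_normal_cone C (xs i))
                 \<and> xs \<longlonglongrightarrow> xb \<and> ys \<longlonglongrightarrow> y}"

definition super_regular :: "'a::euclidean_space set \<Rightarrow> 'a \<Rightarrow> bool" where
  "super_regular C xb \<longleftrightarrow> xb \<in> C \<and>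
     (\<forall>\<delta>>0. \<exists>V. open V \<and> xb \<in> V \<and>
        (\<forall>z\<in>C \<inter> V. \<forall>y\<in>C \<inter> V. \<forall>v\<in>limiting_normal_cone C y.
            inner (z - y) v \<le> \<delta> * norm (z - y) * norm v))"

definition proj :: "'a::euclidean_space set \<Rightarrow> 'a \<Rightarrow> 'a set" where
  "proj C x = {y \<in> C. \<forall>z\<in>C. dist x y \<le> dist x z}"

text \<open>Halfspace data of the algorithm: a_i and b_i, built from the iterates x and
  the chosen projection points xp (xp i = x_i^{(jbar_i)}).\<close>
definition shqp_a :: "(nat \<Rightarrow> 'a::euclidean_space) \<Rightarrow> (nat \<Rightarrow> 'a) \<Rightarrow> nat \<Rightarrow> 'a" where
  "shqp_a x xp i = x (i - 1) - xp i"

definition shqp_b :: "(nat \<Rightarrow> real) \<Rightarrow> (nat \<Rightarrow> 'a::euclidean_space) \<Rightarrow> (nat \<Rightarrow> 'a) \<Rightarrow> nat \<Rightarrow> real" where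
  "shqp_b \<tau> x xp i = inner (shqp_a x xp i) ((1 - \<tau> i) *\<^sub>R xp i + \<tau> i *\<^sub>R x (i - 1))"

definition shqp_F :: "nat \<Rightarrow> (nat \<Rightarrow> real) \<Rightarrow> (nat \<Rightarrow> 'a::euclidean_space) \<Rightarrow> (nat \<Rightarrow> 'a) \<Rightarrow> nat \<Rightarrow> 'a set" where
  "shqp_F p \<tau> x xp i =
     {z. \<forall>l. max 1 (i - p) \<le> l \<and> l \<le> i \<longrightarrow> inner (shqp_a x xp l) z \<le> shqp_b \<tau> x xp l}"

text \<open>A run of the local super-regular SHQP algorithm for sets K 1, ..., K m,
  parameter p (= pbar), parameters tau, starting point x0: iterates x,
  chosen indices jb and chosen projection points xp (all choices arbitrary
  among the admissible ones).\<close>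
definition shqp_run ::
  "(nat \<Rightarrow> 'a::euclidean_space set) \<Rightarrow> nat \<Rightarrow> nat \<Rightarrow> (nat \<Rightarrow> real) \<Rightarrow> 'a
     \<Rightarrow> (nat \<Rightarrow> 'a) \<Rightarrow> (nat \<Rightarrow> nat) \<Rightarrow> (nat \<Rightarrow> 'a) \<Rightarrow> bool" where
  "shqp_run K m p \<tau> x0 x jb xp \<longleftrightarrow> x 0 = x0 \<and>
     (\<forall>i\<ge>1.
        jb i \<in> {1..m} \<and>
        (\<forall>j\<in>{1..m}. infdist (x (i - 1)) (K j) \<le> infdist (x (i - 1)) (K (jb i))) \<and>
        xp i \<in> proj (K (jb i)) (x (i - 1)) \<and>
        x i \<in> proj (shqp_F p \<tau> x xp i) (x (i - 1)))"

end

theory Submission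
  imports Defs
begin

lemma closest_dot_noclosed:
  fixes S :: "'a::euclidean_space set"
  assumes "convex S" "x \<in> S" "y \<in> S" "\<forall>z\<in>S. dist a x \<le> dist a z"
  shows "inner (a - x) (y - x) \<le> 0"
proof (rule ccontr)
  assume "\<not> ?thesis"
  then obtain u where u: "u>0" "u\<le>1" "dist (x + u *\<^sub>R (y - x)) a < dist x a"
    using closer_point_lemma[of a x y] by auto
  let ?z = "(1 - u) *\<^sub>R x + u *\<^sub>R y"
  have "?z \<in> S"
    using convexD_alt[OF assms(1,2,3), of u] using u by auto
  then show False
    using assms(4)[THEN bspec[where x="?z"]] and u(3)
    by (auto simp: dist_commute algebra_simps)
qed

lemma proj_pyth:
  fixes S :: "'a::euclidean_space set"
  assumes "convex S" "y \<in> proj S x" "z \<in> S"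
  shows "(norm (y - z))\<^sup>2 \<le> (norm (x - z))\<^sup>2 - (norm (x - y))\<^sup>2"
proof -
  have y: "y \<in> S" "\<forall>w\<in>S. dist x y \<le> dist x w" using assms(2) by (auto simp: proj_def)
  have d: "inner (x - y) (z - y) \<le> 0" by (rule closest_dot_noclosed[OF assms(1) y(1) assms(3) y(2)])
  have "x - z = (x - y) - (z - y)" by simp
  hence "(norm (x - z))\<^sup>2 = (norm (x - y))\<^sup>2 - 2 * inner (x - y) (z - y) + (norm (z - y))\<^sup>2"
    by (simp add: power2_norm_eq_inner inner_diff_left inner_diff_right inner_commute)
  moreover have "norm (y - z) = norm (z - y)" by (rule norm_minus_commute)
  ultimately show ?thesis using d by simp
qed

lemma shqp_F_convex: "convex (shqp_F p \<tau> x xp i)"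
  unfolding convex_def shqp_F_def
  by (auto simp: inner_add_right intro!: convex_bound_le)

lemma proj_normal:
  fixes C :: "'a::euclidean_space set"
  assumes "xp \<in> proj C x0"
  shows "x0 - xp \<in> limiting_normal_cone C xp"
proof -
  have xp: "xp \<in> C" "\<forall>w\<in>C. dist x0 xp \<le> dist x0 w" using assms by (auto simp: proj_def)
  let ?a = "x0 - xp"
  have reg: "?a \<in> regular_normal_cone C xp"
    unfolding regular_normal_cone_def
  proof (intro CollectI allI impI)
    fix e :: real assume e: "e > 0"
    show "\<exists>d>0. \<forall>x\<in>C. norm (x - xp) < d \<longrightarrow> inner ?a (x - xp) \<le> e * norm (x - xp)"
    proof (intro exI[of _ "2*e"] conjI ballI impI)
      show "0 < 2*e" using e by simp
      fix x assume x: "x \<in> C" "norm (x - xp) < 2*e"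
      have "dist x0 xp \<le> dist x0 x" using xp x by auto
      hence "(norm ?a)\<^sup>2 \<le> (norm (?a - (x - xp)))\<^sup>2"
        by (simp add: dist_norm)
      hence "(norm ?a)\<^sup>2 \<le> (norm ?a)\<^sup>2 - 2 * inner ?a (x - xp) + (norm (x - xp))\<^sup>2"
        by (simp add: power2_norm_eq_inner inner_diff_left inner_diff_right inner_commute)
      hence "2 * inner ?a (x - xp) \<le> norm (x - xp) * norm (x - xp)" by (simp add: power2_eq_square)
      also have "\<dots> \<le> norm (x - xp) * (2*e)" using x(2) by (intro mult_left_mono) auto
      finally show "inner ?a (x - xp) \<le> e * norm (x - xp)" by (simp add: mult.commute)
    qed
  qed
  show ?thesis unfolding limiting_normal_cone_def
    by (rule CollectI, rule exI[of _ "\<lambda>_. xp"], rule exI[of _ "\<lambda>_. ?a"]) (use reg xp in auto)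
qed

theorem lemma5p2:
  fixes K :: "nat \<Rightarrow> 'a::euclidean_space set"
    and m :: nat and xs :: 'a and \<beta> :: real and V1 :: "'a set"
  assumes "m \<ge> 1"
    and "\<forall>l\<in>{1..m}. closed (K l)"
    and "xs \<in> (\<Inter>l\<in>{1..m}. K l)"
    and "\<forall>l\<in>{1..m}. super_regular (K l) xs"
    and "\<beta> \<ge> 1" and "open V1" and "xs \<in> V1"
    and "\<forall>x\<in>V1. infdist x (\<Inter>l\<in>{1..m}. K l)
                  \<le> \<beta> * Max ((\<lambda>l. infdist x (K l)) ` {1..m})"
  shows "\<forall>\<tau>::real. 0 < \<tau> \<and> \<tau> < 1 \<longrightarrow>
     (let \<rho> = sqrt (\<beta>\<^sup>2 - (1 - \<tau>)\<^sup>2) / \<beta>; L = \<beta> / (1 - \<rho>) in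
      \<exists>U. open U \<and> xs \<in> U \<and>
        (\<forall>x0\<in>U. \<forall>p::nat. p \<ge> 1 \<longrightarrow>
          (\<forall>x jb xp. shqp_run K m p (\<lambda>_. \<tau>) x0 x jb xp \<longrightarrow>
             (\<exists>xbar. xbar \<in> (\<Inter>l\<in>{1..m}. K l) \<inter> V1 \<and> x \<longlonglongrightarrow> xbar \<and>
                (\<forall>i. norm (x (Suc i) - xbar) \<le> norm (x i - xbar)) \<and>
                (\<forall>i. norm (x i - xbar) \<le> L * Max ((\<lambda>l. infdist (x i) (K l)) ` {1..m}))))))"
proof (intro allI impI)
  fix \<tau> :: real assume tau: "0 < \<tau> \<and> \<tau> < 1"
  define \<rho> where "\<rho> = sqrt (\<beta>\<^sup>2 - (1 - \<tau>)\<^sup>2) / \<beta>"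
  define q where "q = 1 - \<rho>"
  define L where "L = \<beta> / q"
  have bpos: "\<beta> > 0" using assms(5) by simp
  have t1: "0 < 1 - \<tau>" "1 - \<tau> < 1" using tau by auto
  have arg: "0 \<le> \<beta>\<^sup>2 - (1 - \<tau>)\<^sup>2"
  proof -
    have "(1 - \<tau>)\<^sup>2 \<le> 1\<^sup>2" using t1 by (intro power_mono) auto
    also have "\<dots> \<le> \<beta>\<^sup>2" using assms(5) by (intro power_mono) auto
    finally show ?thesis by simp
  qed
  have rho0: "0 \<le> \<rho>" unfolding \<rho>_def using bpos arg by (intro divide_nonneg_pos) auto
  have sq_lt: "sqrt (\<beta>\<^sup>2 - (1 - \<tau>)\<^sup>2) < \<beta>"
  proof -
    have "\<beta>\<^sup>2 - (1 - \<tau>)\<^sup>2 < \<beta>\<^sup>2" using t1 by simp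
    hence "sqrt (\<beta>\<^sup>2 - (1 - \<tau>)\<^sup>2) < sqrt (\<beta>\<^sup>2)" by (rule real_sqrt_less_mono)
    thus ?thesis using bpos by simp
  qed
  have rho1: "\<rho> < 1" unfolding \<rho>_def using sq_lt bpos by simp
  have rho2: "\<rho>\<^sup>2 = 1 - (1 - \<tau>)\<^sup>2 / \<beta>\<^sup>2"
    unfolding \<rho>_def using arg bpos by (simp add: power_divide field_simps)
  have q0: "0 < q" "q \<le> 1" unfolding q_def using rho0 rho1 by auto
  define C where "C = L + 1"
  have Cpos: "C > 0" unfolding C_def L_def using q0 bpos by (simp add: add_pos_pos)
  define \<delta> where "\<delta> = \<tau> / C"
  have dpos: "\<delta> > 0" unfolding \<delta>_def using tau Cpos by simp
  have "\<forall>l\<in>{1..m}. \<exists>V. open V \<and> xs \<in> V \<and>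
        (\<forall>z\<in>K l \<inter> V. \<forall>y\<in>K l \<inter> V. \<forall>v\<in>limiting_normal_cone (K l) y.
            inner (z - y) v \<le> \<delta> * norm (z - y) * norm v)"
    using assms(4) dpos unfolding super_regular_def by blast
  then obtain Vf where Vf: "\<forall>l\<in>{1..m}. open (Vf l) \<and> xs \<in> Vf l \<and>
        (\<forall>z\<in>K l \<inter> Vf l. \<forall>y\<in>K l \<inter> Vf l. \<forall>v\<in>limiting_normal_cone (K l) y.
            inner (z - y) v \<le> \<delta> * norm (z - y) * norm v)"
    by metis
  define W where "W = V1 \<inter> (\<Inter>l\<in>{1..m}. Vf l)"
  have "open W" unfolding W_def using Vf assms(6) by (intro open_Int open_INT) auto
  moreover have "xs \<in> W" unfolding W_def using Vf assms(7) by auto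
  ultimately obtain r where r: "r > 0" "cball xs r \<subseteq> W" by (meson open_contains_cball)
  define s where "s = r * q / (2 * (1 + q))"
  have spos: "s > 0" unfolding s_def using r q0 by simp
  show "let \<rho> = sqrt (\<beta>\<^sup>2 - (1 - \<tau>)\<^sup>2) / \<beta>; L = \<beta> / (1 - \<rho>) in
      \<exists>U. open U \<and> xs \<in> U \<and>
        (\<forall>x0\<in>U. \<forall>p::nat. p \<ge> 1 \<longrightarrow>
          (\<forall>x jb xp. shqp_run K m p (\<lambda>_. \<tau>) x0 x jb xp \<longrightarrow>
             (\<exists>xbar. xbar \<in> (\<Inter>l\<in>{1..m}. K l) \<inter> V1 \<and> x \<longlonglongrightarrow> xbar \<and>
                (\<forall>i. norm (x (Suc i) - xbar) \<le> norm (x i - xbar)) \<and>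
                (\<forall>i. norm (x i - xbar) \<le> L * Max ((\<lambda>l. infdist (x i) (K l)) ` {1..m})))))"
    unfolding Let_def \<rho>_def[symmetric] q_def[symmetric] L_def[symmetric]
  proof (intro exI[of _ "ball xs s"] conjI ballI allI impI)
    show "open (ball xs s)" by simp
    show "xs \<in> ball xs s" using spos by simp
    fix x0 p x jb xp
    assume x0: "x0 \<in> ball xs s" and p: "1 \<le> p" and run: "shqp_run K m p (\<lambda>_. \<tau>) x0 x jb xp"
    show "\<exists>xbar. xbar \<in> (\<Inter>l\<in>{1..m}. K l) \<inter> V1 \<and> x \<longlonglongrightarrow> xbar \<and>
                (\<forall>i. norm (x (Suc i) - xbar) \<le> norm (x i - xbar)) \<and>
                (\<forall>i. norm (x i - xbar) \<le> L * Max ((\<lambda>l. infdist (x i) (K l)) ` {1..m}))"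
    proof -
    define KK where "KK = (\<Inter>l\<in>{1..m}. K l)"
    have KKc: "closed KK" unfolding KK_def using assms(2) by (intro closed_INT) auto
    have xsK: "xs \<in> KK" unfolding KK_def using assms(3) by simp
    have KKne: "KK \<noteq> {}" using xsK by auto
    define D where "D = (\<lambda>y. Max ((\<lambda>l. infdist y (K l)) ` {1..m}))"
    define d where "d = (\<lambda>k. infdist (x k) KK)"
    define a where "a = shqp_a x xp"
    define b where "b = shqp_b (\<lambda>_. \<tau>) x xp"
    define F where "F = shqp_F p (\<lambda>_. \<tau>) x xp"
    have d0: "\<And>k. 0 \<le> d k" unfolding d_def by (simp add: infdist_nonneg)
    have metric: "\<And>y. y \<in> cball xs r \<Longrightarrow> infdist y KK \<le> \<beta> * D y"
      using assms(8) r(2) unfolding W_def KK_def D_def by blast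
    have runF: "\<And>i. i \<ge> 1 \<Longrightarrow> jb i \<in> {1..m} \<and>
        (\<forall>j\<in>{1..m}. infdist (x (i - 1)) (K j) \<le> infdist (x (i - 1)) (K (jb i))) \<and>
        xp i \<in> proj (K (jb i)) (x (i - 1)) \<and> x i \<in> proj (F i) (x (i - 1))"
      using run unfolding shqp_run_def F_def by blast
    have x00: "x 0 = x0" using run unfolding shqp_run_def by blast
    have aD: "\<And>i. i \<ge> 1 \<Longrightarrow> norm (a i) = D (x (i - 1))"
    proof -
      fix i :: nat assume i: "i \<ge> 1"
      note R = runF[OF i]
      have xpK: "xp i \<in> K (jb i)" "\<forall>w\<in>K (jb i). dist (x (i-1)) (xp i) \<le> dist (x (i-1)) w"
        using R by (auto simp: proj_def)
      have e1: "infdist (x (i-1)) (K (jb i)) = dist (x (i-1)) (xp i)"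
      proof (rule antisym)
        show "infdist (x (i-1)) (K (jb i)) \<le> dist (x (i-1)) (xp i)" using xpK(1) by (rule infdist_le)
        show "dist (x (i-1)) (xp i) \<le> infdist (x (i-1)) (K (jb i))"
        proof -
          have "K (jb i) \<noteq> {}" using xpK by auto
          thus ?thesis unfolding infdist_def using xpK(2) by (simp add: cINF_greatest)
        qed
      qed
      have "D (x (i - 1)) = infdist (x (i-1)) (K (jb i))"
        unfolding D_def by (rule Max_eqI) (use R in auto)
      thus "norm (a i) = D (x (i - 1))" using e1 unfolding a_def shqp_a_def by (simp add: dist_norm)
    qed
    have DleK: "\<And>y. D y \<le> infdist y KK"
    proof -
      fix y
      have ne: "(\<Inter>l\<in>{1..m}. K l) \<noteq> {}" using xsK unfolding KK_def by auto
      have "\<forall>l\<in>{1..m}. infdist y (K l) \<le> infdist y KK"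
        unfolding KK_def using ne by (auto intro!: infdist_mono)
      thus "D y \<le> infdist y KK" unfolding D_def using assms(1) by (subst Max_le_iff) auto
    qed
    have bform: "\<And>i. b i = inner (a i) (xp i) + \<tau> * inner (a i) (a i)"
      unfolding b_def a_def shqp_b_def shqp_a_def
      by (simp add: algebra_simps inner_diff_right inner_add_right inner_commute)
    have H: "\<And>l z. l \<ge> 1 \<Longrightarrow> z \<in> KK \<Longrightarrow> norm (z - xs) \<le> r \<Longrightarrow> norm (x (l-1) - xs) \<le> r/2
              \<Longrightarrow> norm (z - xp l) \<le> C * norm (a l) \<Longrightarrow> inner (a l) z \<le> b l"
    proof -
      fix l z assume l: "l \<ge> 1" and z: "z \<in> KK" "norm (z - xs) \<le> r" "norm (x (l-1) - xs) \<le> r/2"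
        "norm (z - xp l) \<le> C * norm (a l)"
      note R = runF[OF l]
      define j where "j = jb l"
      have j: "j \<in> {1..m}" using R j_def by simp
      have xpK: "xp l \<in> K j" "\<forall>w\<in>K j. dist (x (l-1)) (xp l) \<le> dist (x (l-1)) w"
        using R j_def by (auto simp: proj_def)
      have "dist (x (l-1)) (xp l) \<le> dist (x (l-1)) xs" using xpK(2) xsK j unfolding KK_def by auto
      hence "norm (xp l - xs) \<le> r"
      proof -
        have "norm (xp l - xs) \<le> norm (xp l - x (l-1)) + norm (x (l-1) - xs)"
          by (rule norm_diff_triangle_le[where y="x (l-1)"]) auto
        moreover have "norm (xp l - x (l-1)) \<le> norm (x (l-1) - xs)"
          using \<open>dist (x (l-1)) (xp l) \<le> dist (x (l-1)) xs\<close> by (simp add: dist_norm norm_minus_commute)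
        ultimately show ?thesis using z(3) by linarith
      qed
      hence "xp l \<in> Vf j" "z \<in> Vf j" using r(2) z(2) j unfolding W_def
        by (auto simp: dist_norm norm_minus_commute subset_iff)
      moreover have "z \<in> K j" using z(1) j unfolding KK_def by auto
      moreover have "a l \<in> limiting_normal_cone (K j) (xp l)"
        unfolding a_def shqp_a_def using R j_def proj_normal by blast
      ultimately have "inner (z - xp l) (a l) \<le> \<delta> * norm (z - xp l) * norm (a l)"
        using Vf j xpK(1) by blast
      also have "\<dots> \<le> \<delta> * (C * norm (a l)) * norm (a l)"
        using z(4) dpos by (intro mult_right_mono mult_left_mono) auto
      also have "\<dots> = \<tau> * inner (a l) (a l)"
        unfolding \<delta>_def using Cpos by (simp add: power2_norm_eq_inner[symmetric] power2_eq_square)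
      finally have "inner (a l) (z - xp l) \<le> \<tau> * inner (a l) (a l)" by (simp add: inner_commute)
      thus "inner (a l) z \<le> b l" unfolding bform by (simp add: inner_diff_right)
    qed
    have ax: "\<And>l. 1 \<le> l \<Longrightarrow> norm (x (l-1) - xs) \<le> r/2 \<Longrightarrow> d (l-1) / q \<le> L * norm (a l)"
    proof -
      fix l :: nat assume l: "1 \<le> l" "norm (x (l-1) - xs) \<le> r/2"
      have "x (l-1) \<in> cball xs r" using l(2) r(1) by (simp add: dist_norm norm_minus_commute)
      hence "d (l-1) \<le> \<beta> * norm (a l)" using metric aD[OF l(1)] unfolding d_def by simp
      hence "d (l-1) / q \<le> \<beta> * norm (a l) / q" using q0 by (simp add: divide_right_mono)
      thus "d (l-1) / q \<le> L * norm (a l)" unfolding L_def by simp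
    qed
    have LC: "\<And>t. L * t + t = C * t" unfolding C_def by (simp add: algebra_simps)
    have c0: "norm (x 0 - xs) < s" using x0 x00 by (simp add: dist_norm norm_minus_commute)
    have d00: "d 0 \<le> norm (x 0 - xs)" unfolding d_def using infdist_le[OF xsK] by (simp add: dist_norm)
    have sq: "s * (1 + q) / q = r / 2"
    proof -
      have "q * 2 + q * (q * 2) > 0" using q0 by (intro add_pos_pos mult_pos_pos) auto
      hence "q * 2 + q * (q * 2) \<noteq> 0" by simp
      thus ?thesis unfolding s_def by (simp add: field_simps)
    qed
    define I where "I n \<longleftrightarrow> (\<forall>k\<le>n. \<forall>j\<le>k. norm (x k - x j) \<le> (d j - d k)/q) \<and>
                  (\<forall>k. 1 \<le> k \<and> k \<le> n \<longrightarrow> d k \<le> \<rho> * d (k-1))" for n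
    have posI: "\<And>n k. I n \<Longrightarrow> k \<le> n \<Longrightarrow> norm (x k - xs) \<le> r/2"
    proof -
      fix n k assume In: "I n" and k: "k \<le> n"
      have "norm (x k - x 0) \<le> (d 0 - d k)/q" using In k unfolding I_def by auto
      also have "\<dots> \<le> d 0 / q" using d0[of k] q0 by (simp add: divide_right_mono)
      also have "\<dots> \<le> norm (x 0 - xs) / q" using d00 q0 by (simp add: divide_right_mono)
      finally have h1: "norm (x k - x 0) \<le> norm (x 0 - xs) / q" .
      have h2: "norm (x k - xs) \<le> norm (x k - x 0) + norm (x 0 - xs)"
        by (rule norm_diff_triangle_le[where y="x 0"]) auto
      have "norm (x 0 - xs) / q + norm (x 0 - xs) = norm (x 0 - xs) * (1 + q) / q"
        using q0 by (simp add: field_simps)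
      also have "\<dots> \<le> s * (1 + q) / q" using c0 q0
        by (intro divide_right_mono mult_right_mono) auto
      finally show "norm (x k - xs) \<le> r/2" using h1 h2 sq by linarith
    qed
    have monoI: "\<And>n j k. I n \<Longrightarrow> j \<le> k \<Longrightarrow> k \<le> n \<Longrightarrow> d k \<le> d j"
    proof -
      fix n j k assume In: "I n" "j \<le> k" "k \<le> n"
      have "0 \<le> (d j - d k)/q" using In unfolding I_def
        by (meson norm_ge_zero order_trans)
      thus "d k \<le> d j" using q0 by (simp add: zero_le_divide_iff)
    qed
    have step: "\<And>n. I n \<Longrightarrow> I (Suc n)"
    proof -
      fix n assume In: "I n"
      have pos: "\<And>k. k \<le> n \<Longrightarrow> norm (x k - xs) \<le> r/2" using posI In by blast
      have G1n: "\<And>j k. j \<le> k \<Longrightarrow> k \<le> n \<Longrightarrow> norm (x k - x j) \<le> (d j - d k)/q"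
        using In unfolding I_def by blast
      obtain z where z: "z \<in> KK" "d n = dist (x n) z"
        using infdist_attains_inf[OF KKc KKne, of "x n"] unfolding d_def by blast
      have dnxs: "d n \<le> norm (x n - xs)" unfolding d_def using infdist_le[OF xsK] by (simp add: dist_norm)
      have zxs: "norm (z - xs) \<le> r"
      proof -
        have "norm (z - xs) \<le> norm (z - x n) + norm (x n - xs)"
          by (rule norm_diff_triangle_le[where y="x n"]) auto
        moreover have "norm (z - x n) = d n" using z(2) by (simp add: dist_norm norm_minus_commute)
        ultimately show ?thesis using dnxs pos[of n] by linarith
      qed
      have zF: "z \<in> F (Suc n)"
      proof -
        have "\<forall>l. max 1 (Suc n - p) \<le> l \<and> l \<le> Suc n \<longrightarrow> inner (a l) z \<le> b l"
        proof (intro allI impI)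
          fix l assume "max 1 (Suc n - p) \<le> l \<and> l \<le> Suc n"
          hence l: "1 \<le> l" "l - 1 \<le> n" by auto
          have t1: "norm (z - xp l) \<le> norm (z - x n) + norm (x n - xp l)"
            by (rule norm_diff_triangle_le[where y="x n"]) auto
          have t2: "norm (x n - xp l) \<le> norm (x n - x (l-1)) + norm (x (l-1) - xp l)"
            by (rule norm_diff_triangle_le[where y="x (l-1)"]) auto
          have e1: "norm (z - x n) = d n" using z(2) by (simp add: dist_norm norm_minus_commute)
          have e2: "norm (x (l-1) - xp l) = norm (a l)" unfolding a_def shqp_a_def by simp
          have e3: "norm (x n - x (l-1)) \<le> (d (l-1) - d n)/q" using G1n l(2) by simp
          have e4: "d n + (d (l-1) - d n)/q \<le> d (l-1) / q"
          proof -
            have "d n * q \<le> d n * 1" using d0[of n] q0 by (intro mult_left_mono) auto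
            hence "d n \<le> d n / q" using q0 by (simp add: le_divide_eq)
            thus ?thesis by (simp add: diff_divide_distrib)
          qed
          have e5: "d (l-1) / q \<le> L * norm (a l)" using ax[OF l(1) pos[OF l(2)]] .
          have "norm (z - xp l) \<le> C * norm (a l)" using t1 t2 e1 e2 e3 e4 e5 LC[of "norm (a l)"] by linarith
          thus "inner (a l) z \<le> b l" using H[OF l(1) z(1) zxs pos[OF l(2)]] by blast
        qed
        thus ?thesis unfolding F_def shqp_F_def a_def b_def by simp
      qed
      have xS: "x (Suc n) \<in> proj (F (Suc n)) (x n)" using runF[of "Suc n"] by simp
      have cF: "convex (F (Suc n))" unfolding F_def by (rule shqp_F_convex)
      have pyth: "(norm (x (Suc n) - z))\<^sup>2 \<le> (norm (x n - z))\<^sup>2 - (norm (x n - x (Suc n)))\<^sup>2"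
        by (rule proj_pyth[OF cF xS zF])
      have vle: "norm (x n - x (Suc n)) \<le> d n"
        using xS zF z(2) unfolding proj_def by (auto simp: dist_norm)
      have vge: "(1 - \<tau>) * norm (a (Suc n)) \<le> norm (x n - x (Suc n))"
      proof -
        have xF: "x (Suc n) \<in> F (Suc n)" using xS unfolding proj_def by simp
        have "inner (a (Suc n)) (x (Suc n)) \<le> b (Suc n)"
          using xF p unfolding F_def shqp_F_def a_def b_def by auto
        moreover have "a (Suc n) = x n - xp (Suc n)" unfolding a_def shqp_a_def by simp
        ultimately have "(1 - \<tau>) * inner (a (Suc n)) (a (Suc n)) \<le> inner (a (Suc n)) (x n - x (Suc n))"
        proof -
          assume h1: "inner (a (Suc n)) (x (Suc n)) \<le> b (Suc n)" and h2: "a (Suc n) = x n - xp (Suc n)"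
          have "inner (a (Suc n)) (a (Suc n)) = inner (a (Suc n)) (x n) - inner (a (Suc n)) (xp (Suc n))"
            by (subst (2) h2) (simp add: inner_diff_right)
          thus ?thesis using h1 unfolding bform by (simp add: inner_diff_right algebra_simps)
        qed
        also have "\<dots> \<le> norm (a (Suc n)) * norm (x n - x (Suc n))" by (rule norm_cauchy_schwarz)
        finally have *: "(1 - \<tau>) * norm (a (Suc n)) * norm (a (Suc n)) \<le> norm (a (Suc n)) * norm (x n - x (Suc n))"
          by (simp add: power2_norm_eq_inner[symmetric] power2_eq_square mult.assoc)
        show ?thesis
        proof (cases "norm (a (Suc n)) = 0")
          case True thus ?thesis by simp
        next
          case False
          hence "norm (a (Suc n)) > 0" by simp
          thus ?thesis using * by (simp add: mult.commute mult_le_cancel_left_pos)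
        qed
      qed
      have dnb: "d n / q \<le> L * norm (a (Suc n))" using ax[of "Suc n"] pos[of n] by simp
      hence dnb2: "d n \<le> \<beta> * norm (a (Suc n))" unfolding L_def using q0 by (simp add: field_simps)
      have w: "(1 - \<tau>) * d n / \<beta> \<le> norm (x n - x (Suc n))"
      proof -
        have "(1 - \<tau>) * d n / \<beta> \<le> (1 - \<tau>) * norm (a (Suc n))"
          using dnb2 bpos t1 by (simp add: divide_le_eq mult.commute mult_left_mono)
        thus ?thesis using vge by linarith
      qed
      have w2: "((1 - \<tau>) * d n / \<beta>)\<^sup>2 \<le> (norm (x n - x (Suc n)))\<^sup>2"
        using w t1 bpos d0[of n] by (intro power_mono) auto
      have dS: "d (Suc n) \<le> norm (x (Suc n) - z)" unfolding d_def using infdist_le[OF z(1)] by (simp add: dist_norm)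
      have "(d (Suc n))\<^sup>2 \<le> (norm (x (Suc n) - z))\<^sup>2" using dS d0 by (intro power_mono) auto
      also have "\<dots> \<le> (d n)\<^sup>2 - ((1 - \<tau>) * d n / \<beta>)\<^sup>2"
        using pyth w2 z(2) by (simp add: dist_norm)
      also have "\<dots> = (\<rho> * d n)\<^sup>2"
      proof -
        have e1: "((1 - \<tau>) * d n / \<beta>)\<^sup>2 = (1 - \<tau>)\<^sup>2 / \<beta>\<^sup>2 * (d n)\<^sup>2"
          by (simp add: power_mult_distrib power_divide)
        have e2: "(\<rho> * d n)\<^sup>2 = (1 - (1 - \<tau>)\<^sup>2 / \<beta>\<^sup>2) * (d n)\<^sup>2"
          by (simp add: power_mult_distrib rho2)
        show ?thesis unfolding e1 e2 by (simp add: algebra_simps)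
      qed
      finally have rS: "d (Suc n) \<le> \<rho> * d n"
        by (rule power2_le_imp_le[OF _ mult_nonneg_nonneg[OF rho0 d0]])
      have key: "d n \<le> (d n - d (Suc n)) / q"
      proof -
        have "q * d n \<le> d n - d (Suc n)" using rS unfolding q_def by (simp add: algebra_simps)
        thus ?thesis using q0 by (simp add: le_divide_eq mult.commute)
      qed
      show "I (Suc n)" unfolding I_def
      proof (intro conjI allI impI)
        fix k j assume k: "k \<le> Suc n" and j: "j \<le> k"
        show "norm (x k - x j) \<le> (d j - d k)/q"
        proof (cases "k \<le> n")
          case True thus ?thesis using G1n j by blast
        next
          case False
          hence kk: "k = Suc n" using k by simp
          show ?thesis
          proof (cases "j = Suc n")
            case True thus ?thesis using kk by simp
          next
            case False
            hence jn: "j \<le> n" using j kk by simp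
            have "norm (x (Suc n) - x j) \<le> norm (x (Suc n) - x n) + norm (x n - x j)"
              by (rule norm_diff_triangle_le[where y="x n"]) auto
            moreover have "norm (x (Suc n) - x n) = norm (x n - x (Suc n))" by (rule norm_minus_commute)
            moreover have "norm (x n - x j) \<le> (d j - d n)/q" using G1n jn by simp
            moreover have "(d j - d n)/q + (d n - d (Suc n))/q = (d j - d (Suc n))/q"
              by (simp add: diff_divide_distrib)
            ultimately show ?thesis using vle key unfolding kk by linarith
          qed
        qed
      next
        fix k assume k: "1 \<le> k \<and> k \<le> Suc n"
        show "d k \<le> \<rho> * d (k - 1)"
        proof (cases "k \<le> n")
          case True thus ?thesis using In k unfolding I_def by blast
        next
          case False thus ?thesis using k rS by (simp add: le_Suc_eq)
        qed
      qed
    qed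
    have allIn: "\<And>n. I n"
    proof -
      fix n show "I n"
      proof (induction n)
        case 0 show ?case unfolding I_def by auto
      next
        case (Suc n) thus ?case by (rule step)
      qed
    qed
    have G1: "\<And>j k. j \<le> k \<Longrightarrow> norm (x k - x j) \<le> (d j - d k)/q"
      using allIn unfolding I_def by blast
    have G2: "\<And>k. d (Suc k) \<le> \<rho> * d k"
    proof -
      fix k show "d (Suc k) \<le> \<rho> * d k" using allIn[of "Suc k"] unfolding I_def by auto
    qed
    have G3: "\<And>k. norm (x k - xs) \<le> r/2" using posI allIn by blast
    have Gm: "\<And>j k. j \<le> k \<Longrightarrow> d k \<le> d j" using monoI allIn by blast
    have Gp: "\<And>k. d k \<le> \<rho>^k * d 0"
    proof -
      fix k show "d k \<le> \<rho>^k * d 0"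
      proof (induction k)
        case 0 show ?case by simp
      next
        case (Suc k)
        have "d (Suc k) \<le> \<rho> * d k" by (rule G2)
        also have "\<dots> \<le> \<rho> * (\<rho>^k * d 0)" using Suc rho0 by (rule mult_left_mono)
        finally show ?case by (simp add: mult.assoc)
      qed
    qed
    have dlim: "d \<longlonglongrightarrow> 0"
    proof (rule tendsto_sandwich[of "\<lambda>_. 0" d sequentially "\<lambda>k. \<rho>^k * d 0"])
      show "\<forall>\<^sub>F n in sequentially. 0 \<le> d n" using d0 by simp
      show "\<forall>\<^sub>F n in sequentially. d n \<le> \<rho>^n * d 0" using Gp by simp
      show "(\<lambda>_. 0::real) \<longlonglongrightarrow> 0" by simp
      have "(\<lambda>k. \<rho>^k) \<longlonglongrightarrow> 0" using rho0 rho1 by (intro LIMSEQ_power_zero) simp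
      thus "(\<lambda>k. \<rho>^k * d 0) \<longlonglongrightarrow> 0" by (rule tendsto_mult_left_zero)
    qed
    have Ca: "Cauchy x"
    proof (rule metric_CauchyI)
      fix e :: real assume e: "0 < e"
      have "eventually (\<lambda>k. d k < e * q) sequentially"
        using order_tendstoD(2)[OF dlim] e q0 by simp
      then obtain M where M: "\<And>k. k \<ge> M \<Longrightarrow> d k < e * q" unfolding eventually_sequentially by blast
      have bnd: "\<And>j k. M \<le> j \<Longrightarrow> j \<le> k \<Longrightarrow> norm (x k - x j) < e"
      proof -
        fix j k assume jk: "M \<le> j" "j \<le> k"
        have "norm (x k - x j) \<le> (d j - d k)/q" using G1 jk(2) .
        also have "\<dots> \<le> d j / q" using d0[of k] q0 by (simp add: divide_right_mono)
        also have "\<dots> < e" using M[OF jk(1)] q0 by (simp add: divide_less_eq)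
        finally show "norm (x k - x j) < e" .
      qed
      have "\<forall>i1\<ge>M. \<forall>i2\<ge>M. dist (x i1) (x i2) < e"
      proof (intro allI impI)
        fix i1 i2 assume mn: "M \<le> i1" "M \<le> i2"
        show "dist (x i1) (x i2) < e"
        proof (cases "i1 \<le> i2")
          case True thus ?thesis using bnd[OF mn(1) True] by (simp add: dist_norm norm_minus_commute)
        next
          case False thus ?thesis using bnd[OF mn(2), of i1] by (simp add: dist_norm)
        qed
      qed
      thus "\<exists>M. \<forall>m\<ge>M. \<forall>n\<ge>M. dist (x m) (x n) < e" by blast
    qed
    then obtain xbar where xb: "x \<longlonglongrightarrow> xbar" unfolding Cauchy_convergent_iff convergent_def by blast
    have xbd: "\<And>j. norm (x j - xbar) \<le> d j / q"
    proof -
      fix j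
      have "(\<lambda>k. norm (x k - x j)) \<longlonglongrightarrow> norm (xbar - x j)" using xb by (intro tendsto_intros)
      moreover have "\<exists>N. \<forall>k\<ge>N. norm (x k - x j) \<le> d j / q"
      proof (intro exI[of _ j] allI impI)
        fix k assume "j \<le> k"
        hence "norm (x k - x j) \<le> (d j - d k)/q" by (rule G1)
        also have "\<dots> \<le> d j / q" using d0[of k] q0 by (simp add: divide_right_mono)
        finally show "norm (x k - x j) \<le> d j / q" .
      qed
      ultimately have "norm (xbar - x j) \<le> d j / q" by (rule LIMSEQ_le_const2)
      thus "norm (x j - xbar) \<le> d j / q" by (simp add: norm_minus_commute)
    qed
    have xbK: "xbar \<in> KK"
    proof -
      have "d \<longlonglongrightarrow> infdist xbar KK" unfolding d_def using xb by (intro tendsto_intros)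
      hence "infdist xbar KK = 0" using dlim LIMSEQ_unique by blast
      thus ?thesis using in_closed_iff_infdist_zero[OF KKc KKne] by blast
    qed
    have xbxs: "norm (xbar - xs) \<le> r/2"
    proof -
      have "(\<lambda>k. norm (x k - xs)) \<longlonglongrightarrow> norm (xbar - xs)" using xb by (intro tendsto_intros)
      thus ?thesis by (rule LIMSEQ_le_const2) (use G3 in blast)
    qed
    have xbV: "xbar \<in> V1"
    proof -
      have "xbar \<in> cball xs r" using xbxs r(1) by (simp add: dist_norm norm_minus_commute)
      thus ?thesis using r(2) unfolding W_def by blast
    qed
    show ?thesis
    proof (intro exI[of _ xbar] conjI allI)
      show "xbar \<in> (\<Inter>l\<in>{1..m}. K l) \<inter> V1" using xbK xbV unfolding KK_def by blast
      show "x \<longlonglongrightarrow> xbar" by (rule xb)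
    next
      fix i
      have "x i \<in> cball xs r" using G3[of i] r(1) by (simp add: dist_norm norm_minus_commute)
      hence "d i \<le> \<beta> * D (x i)" using metric unfolding d_def by simp
      hence "d i / q \<le> \<beta> * D (x i) / q" using q0 by (simp add: divide_right_mono)
      thus "norm (x i - xbar) \<le> L * Max ((\<lambda>l. infdist (x i) (K l)) ` {1..m})"
        using xbd[of i] unfolding L_def D_def by simp
    next
      fix i
      have xbF: "xbar \<in> F (Suc i)"
      proof -
        have "\<forall>l. max 1 (Suc i - p) \<le> l \<and> l \<le> Suc i \<longrightarrow> inner (a l) xbar \<le> b l"
        proof (intro allI impI)
          fix l assume "max 1 (Suc i - p) \<le> l \<and> l \<le> Suc i"
          hence l: "1 \<le> l" by auto
          have t1: "norm (xbar - xp l) \<le> norm (xbar - x (l-1)) + norm (x (l-1) - xp l)"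
            by (rule norm_diff_triangle_le[where y="x (l-1)"]) auto
          have e1: "norm (xbar - x (l-1)) \<le> d (l-1) / q" using xbd[of "l-1"] by (simp add: norm_minus_commute)
          have e2: "norm (x (l-1) - xp l) = norm (a l)" unfolding a_def shqp_a_def by simp
          have e5: "d (l-1) / q \<le> L * norm (a l)" using ax[OF l G3] .
          have "norm (xbar - xp l) \<le> C * norm (a l)" using t1 e1 e2 e5 LC[of "norm (a l)"] by linarith
          moreover have "norm (xbar - xs) \<le> r" using xbxs r(1) by linarith
          ultimately show "inner (a l) xbar \<le> b l" using H[OF l xbK _ G3] by blast
        qed
        thus ?thesis unfolding F_def shqp_F_def a_def b_def by simp
      qed
      have xS: "x (Suc i) \<in> proj (F (Suc i)) (x i)" using runF[of "Suc i"] by simp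
      have cF: "convex (F (Suc i))" unfolding F_def by (rule shqp_F_convex)
      have "(norm (x (Suc i) - xbar))\<^sup>2 \<le> (norm (x i - xbar))\<^sup>2 - (norm (x i - x (Suc i)))\<^sup>2"
        by (rule proj_pyth[OF cF xS xbF])
      hence "(norm (x (Suc i) - xbar))\<^sup>2 \<le> (norm (x i - xbar))\<^sup>2" using zero_le_power2[of "norm (x i - x (Suc i))"] by linarith
      thus "norm (x (Suc i) - xbar) \<le> norm (x i - xbar)" by (rule power2_le_imp_le) simp
    qed
    qed
  qed
qed

end
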